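(* The theory $\mathsf{Seq}$ is $\Sigma$-complete: for every $\Sigma$-sentence $\phi$ of $\mathcal{L}$, if $\mathfrak{S}\models\phi$ then $\mathsf{Seq}\vdash\phi$.
   Context: $\mathcal{L}=\{e,\vdash,\circ\}$ with $e$ a constant and $\vdash$ (infix), $\circ$ binary function symbols. $\mathsf{Seq}$ has axioms: ($\mathsf{Seq}_1$) $\forall xy[x\vdash y\neq e]$; ($\mathsf{Seq}_2$) $\forall x_1x_2y_1y_2[x_1\vdash x_2=y_1\vdash y_2\rightarrow(x_1=y_1\wedge x_2=y_2)]$; ($\mathsf{Seq}_3$) $\forall x[x\circ e=x]$; ($\mathsf{Seq}_4$) $\forall xyz[x\circ(y\vdash z)=(x\circ y)\vdash z]$; ($\mathsf{Seq}_5$) $\forall x[x=e\vee\exists yz[x=y\vdash z]]$. Sequences: $()$ is a sequence and $(s_1,\ldots,s_n)$ ($n>0$) is a sequence whenever the $s_i$ are. The standard structure $\mathfrak{S}$ has universe all sequences, $e^{\mathfrak{S}}=()$, $(s_1,\ldots,s_n)\vdash^{\mathfrak{S}}t=(s_1,\ldots,s_n,t)$, $\circ^{\mathfrak{S}}$ concatenation. $s\sqsubseteq t$ abbreviates $\exists y[s\circ y=t]$, and $\forall x\sqsubseteq t[\phi]$ abbreviates $\forall x[x\sqsubseteq t\rightarrow\phi]$. $\Sigma$-formulas are defined inductively: atomic formulas and their negations; $s\sqsubseteq t$ and $\neg(s\sqsubseteq t)$ for terms $s,t$; conjunctions and disjunctions of $\Sigma$-formulas; $\exists x[\phi]$ for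 $\Sigma$-formulas $\phi$; $\forall x\sqsubseteq t[\phi]$ for $\Sigma$-formulas $\phi$ and terms $t$ not containing $x$. *)

theory Defs
  imports Main
begin

datatype tm = Var nat | E | Cons tm tm | Cat tm tm
  (* Cons s t represents s \<turnstile> t ; Cat s t represents s \<circ> t *)

datatype fm = Eq tm tm | Neg fm | Conj fm fm | Disj fm fm | Imp fm fm | Ex fm | All fm

fun liftt :: "nat \<Rightarrow> tm \<Rightarrow> tm" where
  "liftt k (Var i) = (if i < k then Var i else Var (Suc i))"
| "liftt k E = E"
| "liftt k (Cons s t) = Cons (liftt k s) (liftt k t)"
| "liftt k (Cat s t) = Cat (liftt k s) (liftt k t)"

fun liftf :: "nat \<Rightarrow> fm \<Rightarrow> fm" where
  "liftf k (Eq s t) = Eq (liftt k s) (liftt k t)"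
| "liftf k (Neg p) = Neg (liftf k p)"
| "liftf k (Conj p q) = Conj (liftf k p) (liftf k q)"
| "liftf k (Disj p q) = Disj (liftf k p) (liftf k q)"
| "liftf k (Imp p q) = Imp (liftf k p) (liftf k q)"
| "liftf k (Ex p) = Ex (liftf (Suc k) p)"
| "liftf k (All p) = All (liftf (Suc k) p)"

fun substt :: "tm \<Rightarrow> tm \<Rightarrow> nat \<Rightarrow> tm" where
  "substt (Var i) u k = (if i < k then Var i else if i = k then u else Var (i - 1))"
| "substt E u k = E"
| "substt (Cons s t) u k = Cons (substt s u k) (substt t u k)"
| "substt (Cat s t) u k = Cat (substt s u k) (substt t u k)"

fun substf :: "fm \<Rightarrow> tm \<Rightarrow> nat \<Rightarrow> fm" where
  "substf (Eq s t) u k = Eq (substt s u k) (substt t u k)"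
| "substf (Neg p) u k = Neg (substf p u k)"
| "substf (Conj p q) u k = Conj (substf p u k) (substf q u k)"
| "substf (Disj p q) u k = Disj (substf p u k) (substf q u k)"
| "substf (Imp p q) u k = Imp (substf p u k) (substf q u k)"
| "substf (Ex p) u k = Ex (substf p (liftt 0 u) (Suc k))"
| "substf (All p) u k = All (substf p (liftt 0 u) (Suc k))"

text \<open>Closedness: all free indices below k; sentences are formulas with closedf 0.\<close>
fun closedt :: "nat \<Rightarrow> tm \<Rightarrow> bool" where
  "closedt k (Var i) = (i < k)"
| "closedt k E = True"
| "closedt k (Cons s t) = (closedt k s \<and> closedt k t)"
| "closedt k (Cat s t) = (closedt k s \<and> closedt k t)"

fun closedf :: "nat \<Rightarrow> fm \<Rightarrow> bool" where
  "closedf k (Eq s t) = (closedt k s \<and> closedt k t)"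
| "closedf k (Neg p) = closedf k p"
| "closedf k (Conj p q) = (closedf k p \<and> closedf k q)"
| "closedf k (Disj p q) = (closedf k p \<and> closedf k q)"
| "closedf k (Imp p q) = (closedf k p \<and> closedf k q)"
| "closedf k (Ex p) = closedf (Suc k) p"
| "closedf k (All p) = closedf (Suc k) p"

definition sub :: "tm \<Rightarrow> tm \<Rightarrow> fm" where
  "sub s t = Ex (Eq (Cat (liftt 0 s) (Var 0)) (liftt 0 t))"

text \<open>\<forall>x \<sqsubseteq> t [p] := \<forall>x[x \<sqsubseteq> t \<rightarrow> p]; here x is bound index 0 of p and t is a term
  of the outer context (so t cannot contain the bound x).\<close>
definition ball :: "tm \<Rightarrow> fm \<Rightarrow> fm" where
  "ball t p = All (Imp (sub (Var 0) (liftt 0 t)) p)"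

inductive sigma :: "fm \<Rightarrow> bool" where
  sig_eq: "sigma (Eq s t)"
| sig_neq: "sigma (Neg (Eq s t))"
| sig_sub: "sigma (sub s t)"
| sig_nsub: "sigma (Neg (sub s t))"
| sig_conj: "sigma p \<Longrightarrow> sigma q \<Longrightarrow> sigma (Conj p q)"
| sig_disj: "sigma p \<Longrightarrow> sigma q \<Longrightarrow> sigma (Disj p q)"
| sig_ex: "sigma p \<Longrightarrow> sigma (Ex p)"
| sig_ball: "sigma p \<Longrightarrow> sigma (ball t p)"

datatype seq = Sq "seq list"

fun scons :: "seq \<Rightarrow> seq \<Rightarrow> seq" where
  "scons (Sq xs) t = Sq (xs @ [t])"

fun scat :: "seq \<Rightarrow> seq \<Rightarrow> seq" where
  "scat (Sq xs) (Sq ys) = Sq (xs @ ys)"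

fun evalt :: "(nat \<Rightarrow> seq) \<Rightarrow> tm \<Rightarrow> seq" where
  "evalt env (Var i) = env i"
| "evalt env E = Sq []"
| "evalt env (Cons s t) = scons (evalt env s) (evalt env t)"
| "evalt env (Cat s t) = scat (evalt env s) (evalt env t)"

fun sat :: "(nat \<Rightarrow> seq) \<Rightarrow> fm \<Rightarrow> bool" where
  "sat env (Eq s t) = (evalt env s = evalt env t)"
| "sat env (Neg p) = (\<not> sat env p)"
| "sat env (Conj p q) = (sat env p \<and> sat env q)"
| "sat env (Disj p q) = (sat env p \<or> sat env q)"
| "sat env (Imp p q) = (sat env p \<longrightarrow> sat env q)"
| "sat env (Ex p) = (\<exists>x. sat (case_nat x env) p)"
| "sat env (All p) = (\<forall>x. sat (case_nat x env) p)"

definition std_models :: "fm \<Rightarrow> bool" where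
  "std_models p = (\<forall>env. sat env p)"

inductive nd :: "fm list \<Rightarrow> fm \<Rightarrow> bool" where
  Assm: "p \<in> set G \<Longrightarrow> nd G p"
| ImpI: "nd (p # G) q \<Longrightarrow> nd G (Imp p q)"
| ImpE: "nd G (Imp p q) \<Longrightarrow> nd G p \<Longrightarrow> nd G q"
| ConjI: "nd G p \<Longrightarrow> nd G q \<Longrightarrow> nd G (Conj p q)"
| ConjE1: "nd G (Conj p q) \<Longrightarrow> nd G p"
| ConjE2: "nd G (Conj p q) \<Longrightarrow> nd G q"
| DisjI1: "nd G p \<Longrightarrow> nd G (Disj p q)"
| DisjI2: "nd G q \<Longrightarrow> nd G (Disj p q)"
| DisjE: "nd G (Disj p q) \<Longrightarrow> nd (p # G) r \<Longrightarrow> nd (q # G) r \<Longrightarrow> nd G r"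
| NegI: "nd (p # G) q \<Longrightarrow> nd (p # G) (Neg q) \<Longrightarrow> nd G (Neg p)"
| NegE: "nd G p \<Longrightarrow> nd G (Neg p) \<Longrightarrow> nd G q"
| Classical: "nd (Neg p # G) q \<Longrightarrow> nd (Neg p # G) (Neg q) \<Longrightarrow> nd G p"
| AllI: "nd (map (liftf 0) G) p \<Longrightarrow> nd G (All p)"
| AllE: "nd G (All p) \<Longrightarrow> nd G (substf p t 0)"
| ExI: "nd G (substf p t 0) \<Longrightarrow> nd G (Ex p)"
| ExE: "nd G (Ex p) \<Longrightarrow> nd (p # map (liftf 0) G) (liftf 0 q) \<Longrightarrow> nd G q"
| Refl: "nd G (Eq t t)"
| Subst: "nd G (Eq s t) \<Longrightarrow> nd G (substf p s 0) \<Longrightarrow> nd G (substf p t 0)"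

definition seq_axioms :: "fm list" where
  "seq_axioms =
    [ All (All (Neg (Eq (Cons (Var 1) (Var 0)) E))),
      All (All (All (All (Imp (Eq (Cons (Var 3) (Var 2)) (Cons (Var 1) (Var 0)))
                             (Conj (Eq (Var 3) (Var 1)) (Eq (Var 2) (Var 0))))))),
      All (Eq (Cat (Var 0) E) (Var 0)),
      All (All (All (Eq (Cat (Var 2) (Cons (Var 1) (Var 0))) (Cons (Cat (Var 2) (Var 1)) (Var 0))))),
      All (Disj (Eq (Var 0) E) (Ex (Ex (Eq (Var 2) (Cons (Var 1) (Var 0)))))) ]"

definition Seq_proves :: "fm \<Rightarrow> bool" where
  "Seq_proves p = nd seq_axioms p"

end

theory Submission
  imports Defs
begin


lemma nd_weaken: "nd G p \<Longrightarrow> set G \<subseteq> set G' \<Longrightarrow> nd G' p"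
proof (induction arbitrary: G' rule: nd.induct)
  case (AllI G p) then show ?case by (metis image_mono list.set_map nd.AllI)
next
  case (ExE G p q) then show ?case
    by (metis (no_types, lifting) image_mono list.set_map nd.ExE set_subset_Cons insert_mono list.simps(15))
next
  case (DisjE G p q r) then show ?case by (metis nd.DisjE insert_mono list.simps(15))
next
  case (NegI p G q) then show ?case by (metis nd.NegI insert_mono list.simps(15))
next
  case (Classical p G q) then show ?case by (metis nd.Classical insert_mono list.simps(15))
next
  case (Subst G s t p) then show ?case by (blast intro: nd.Subst)
qed (auto intro: nd.intros simp: subset_iff)

lemma ExE_mem': "nd (p # map (liftf 0) G) (liftf 0 q) \<Longrightarrow> Ex p \<in> set G \<Longrightarrow> nd G q"
  by (rule ExE[OF Assm])

lemma nd_cut: "nd (f # G) r \<Longrightarrow> nd G f \<Longrightarrow> nd G r"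
  by (meson nd.ImpE nd.ImpI)

lemma nd_cut_list: "nd (fs @ G) r \<Longrightarrow> (\<forall>f\<in>set fs. nd G f) \<Longrightarrow> nd G r"
proof (induction fs arbitrary: G)
  case Nil then show ?case by simp
next
  case (Cons f fs)
  have "nd (fs @ f # G) r" using Cons.prems(1) by (rule nd_weaken) auto
  moreover have "\<forall>f'\<in>set fs. nd (f # G) f'" using Cons.prems(2) by (auto intro: nd_weaken)
  ultimately have "nd (f # G) r" using Cons.IH by blast
  then show ?case using Cons.prems(2) nd_cut by auto
qed

lemma substt_liftt[simp]: "substt (liftt k a) b k = a"
  by (induction a) auto

lemma substt_liftt2[simp]: "j \<le> k \<Longrightarrow> substt (liftt j a) (liftt j b) (Suc k) = liftt j (substt a b k)"
  by (induction a) auto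

lemma closedt_liftt[simp]: "j \<le> k \<Longrightarrow> closedt (Suc k) (liftt j s) = closedt k s"
  by (induction s) auto

lemma liftt_closed[simp]: "closedt k t \<Longrightarrow> liftt k t = t"
  by (induction t) auto

lemma liftf_closed: "closedf k p \<Longrightarrow> liftf k p = p"
  by (induction p arbitrary: k) auto

lemma closedt_mono: "closedt k t \<Longrightarrow> k \<le> j \<Longrightarrow> closedt j t"
  by (induction t) auto

lemma substt_closed[simp]: "closedt k t \<Longrightarrow> substt t u k = t"
  by (induction t) auto

lemma closedt_substt: "closedt (Suc k) s \<Longrightarrow> closedt k u \<Longrightarrow> closedt k (substt s u k)"
  by (induction s) auto

lemma closedt_liftt': "closedt k u \<Longrightarrow> closedt (Suc k) (liftt j u)"
  by (induction u) auto

lemma closedf_substf: "closedf (Suc k) p \<Longrightarrow> closedt k u \<Longrightarrow> closedf k (substf p u k)"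
  by (induction p arbitrary: k u) (auto simp: closedt_substt closedt_liftt')

lemma substt_var_lift: "closedt (Suc k) s \<Longrightarrow> substt s (Var (Suc k)) k = liftt k s"
  by (induction s) auto

lemma substf_var_lift: "closedf (Suc k) p \<Longrightarrow> substf p (Var (Suc k)) k = liftf k p"
  by (induction p arbitrary: k) (auto simp: substt_var_lift)

lemma axioms_closed: "f \<in> set seq_axioms \<Longrightarrow> closedf 0 f"
  by (auto simp: seq_axioms_def)

lemma map_lift_axioms[simp]: "map (liftf 0) seq_axioms = seq_axioms"
  by (simp add: seq_axioms_def)

lemma ax_lift: "set seq_axioms \<subseteq> set G \<Longrightarrow> set seq_axioms \<subseteq> set (map (liftf 0) G)"
  by (metis image_mono list.set_map map_lift_axioms)

lemma ax_lift2: "set seq_axioms \<subseteq> set G \<Longrightarrow> set seq_axioms \<subseteq> set (p # map (liftf 0) G)"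
  using ax_lift by auto

lemma ax1: "set seq_axioms \<subseteq> set G \<Longrightarrow> nd G (Neg (Eq (Cons a b) E))"
proof -
  assume h: "set seq_axioms \<subseteq> set G"
  have "nd G (All (All (Neg (Eq (Cons (Var 1) (Var 0)) E))))"
    using h by (intro Assm) (auto simp: seq_axioms_def)
  from AllE[OF AllE[OF this, of a, simplified], of b, simplified] show ?thesis by simp
qed

lemma ax2: "set seq_axioms \<subseteq> set G \<Longrightarrow> nd G (Imp (Eq (Cons a b) (Cons c d)) (Conj (Eq a c) (Eq b d)))"
proof -
  assume h: "set seq_axioms \<subseteq> set G"
  have "nd G (All (All (All (All (Imp (Eq (Cons (Var 3) (Var 2)) (Cons (Var 1) (Var 0)))
                             (Conj (Eq (Var 3) (Var 1)) (Eq (Var 2) (Var 0))))))))"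
    using h by (intro Assm) (auto simp: seq_axioms_def)
  from AllE[OF AllE[OF AllE[OF AllE[OF this, of a, simplified], of b, simplified], of c, simplified], of d, simplified] show ?thesis
    by (simp add: numeral_eq_Suc)
qed

lemma ax3: "set seq_axioms \<subseteq> set G \<Longrightarrow> nd G (Eq (Cat a E) a)"
proof -
  assume h: "set seq_axioms \<subseteq> set G"
  have "nd G (All (Eq (Cat (Var 0) E) (Var 0)))"
    using h by (intro Assm) (auto simp: seq_axioms_def)
  from AllE[OF this, of a] show ?thesis by simp
qed

lemma ax4: "set seq_axioms \<subseteq> set G \<Longrightarrow> nd G (Eq (Cat a (Cons b c)) (Cons (Cat a b) c))"
proof -
  assume h: "set seq_axioms \<subseteq> set G"
  have "nd G (All (All (All (Eq (Cat (Var 2) (Cons (Var 1) (Var 0))) (Cons (Cat (Var 2) (Var 1)) (Var 0))))))"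
    using h by (intro Assm) (auto simp: seq_axioms_def)
  from AllE[OF AllE[OF AllE[OF this, of a, simplified], of b, simplified], of c, simplified] show ?thesis
    by (simp add: numeral_eq_Suc)
qed

lemma ax5: "set seq_axioms \<subseteq> set G \<Longrightarrow>
  nd G (Disj (Eq a E) (Ex (Ex (Eq (liftt 0 (liftt 0 a)) (Cons (Var 1) (Var 0))))))"
proof -
  assume h: "set seq_axioms \<subseteq> set G"
  have "nd G (All (Disj (Eq (Var 0) E) (Ex (Ex (Eq (Var 2) (Cons (Var 1) (Var 0)))))))"
    using h by (intro Assm) (auto simp: seq_axioms_def)
  from AllE[OF this, of a] show ?thesis
    by (simp add: numeral_eq_Suc)
qed



abbreviation AX :: "fm list \<Rightarrow> bool" where "AX G \<equiv> set seq_axioms \<subseteq> set G"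

lemma Subst': "nd G (Eq s t) \<Longrightarrow> nd G a \<Longrightarrow> a = substf p s 0 \<Longrightarrow> b = substf p t 0 \<Longrightarrow> nd G b"
  using Subst by blast

lemma eq_sym: "nd G (Eq s t) \<Longrightarrow> nd G (Eq t s)"
  by (rule Subst'[where p = "Eq (Var 0) (liftt 0 s)", OF _ Refl]) auto

lemma eq_trans: "nd G (Eq s t) \<Longrightarrow> nd G (Eq t u) \<Longrightarrow> nd G (Eq s u)"
  by (rule Subst'[where p = "Eq (liftt 0 s) (Var 0)"]) auto

lemma cons_cong: "nd G (Eq a c) \<Longrightarrow> nd G (Eq b d) \<Longrightarrow> nd G (Eq (Cons a b) (Cons c d))"
proof -
  assume 1: "nd G (Eq a c)" and 2: "nd G (Eq b d)"
  have "nd G (Eq (Cons a b) (Cons c b))"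
    by (rule Subst'[where p = "Eq (Cons (liftt 0 a) (liftt 0 b)) (Cons (Var 0) (liftt 0 b))", OF 1 Refl]) auto
  moreover have "nd G (Eq (Cons c b) (Cons c d))"
    by (rule Subst'[where p = "Eq (Cons (liftt 0 c) (liftt 0 b)) (Cons (liftt 0 c) (Var 0))", OF 2 Refl]) auto
  ultimately show ?thesis by (rule eq_trans)
qed

lemma cat_cong: "nd G (Eq a c) \<Longrightarrow> nd G (Eq b d) \<Longrightarrow> nd G (Eq (Cat a b) (Cat c d))"
proof -
  assume 1: "nd G (Eq a c)" and 2: "nd G (Eq b d)"
  have "nd G (Eq (Cat a b) (Cat c b))"
    by (rule Subst'[where p = "Eq (Cat (liftt 0 a) (liftt 0 b)) (Cat (Var 0) (liftt 0 b))", OF 1 Refl]) auto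
  moreover have "nd G (Eq (Cat c b) (Cat c d))"
    by (rule Subst'[where p = "Eq (Cat (liftt 0 c) (liftt 0 b)) (Cat (liftt 0 c) (Var 0))", OF 2 Refl]) auto
  ultimately show ?thesis by (rule eq_trans)
qed

lemma neg_sym: "nd G (Neg (Eq s t)) \<Longrightarrow> nd G (Neg (Eq t s))"
proof -
  assume h: "nd G (Neg (Eq s t))"
  have "nd (Eq t s # G) (Eq s t)" by (rule eq_sym, rule Assm) simp
  moreover have "nd (Eq t s # G) (Neg (Eq s t))" using h by (rule nd_weaken) auto
  ultimately show ?thesis by (rule NegI)
qed

function num :: "seq \<Rightarrow> tm" where
  "num (Sq xs) = (if xs = [] then E else Cons (num (Sq (butlast xs))) (num (last xs)))"
  by pat_completeness auto
termination
proof (relation "measure size")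
  fix xs :: "seq list"
  assume "xs \<noteq> []"
  then obtain ys y where "xs = ys @ [y]" by (metis rev_exhaust)
  then show "(Sq (butlast xs), Sq xs) \<in> measure size" "(last xs, Sq xs) \<in> measure size"
    by auto
qed auto

lemma num_nil[simp]: "num (Sq []) = E" by simp
lemma num_snoc[simp]: "num (Sq (xs @ [x])) = Cons (num (Sq xs)) (num x)" by simp
declare num.simps[simp del]

lemma seq_snoc_induct:
  assumes "P (Sq [])" and "\<And>xs x. P (Sq xs) \<Longrightarrow> P x \<Longrightarrow> P (Sq (xs @ [x]))"
  shows "P a"
proof (induction a rule: measure_induct_rule[where f = size])
  case (less a)
  obtain xs where a: "a = Sq xs" by (cases a)
  show ?case
  proof (cases xs rule: rev_exhaust)
    case Nil then show ?thesis using a assms(1) by simp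
  next
    case (snoc ys y)
    have "P (Sq ys)" by (rule less) (simp add: a snoc)
    moreover have "P y" by (rule less) (simp add: a snoc)
    ultimately show ?thesis using a snoc assms(2) by simp
  qed
qed

lemma closedt_num[simp]: "closedt k (num a)"
  by (induction a rule: seq_snoc_induct) auto

lemma liftt_num[simp]: "liftt k (num a) = num a"
  by simp

lemma evalt_num[simp]: "evalt env (num a) = a"
  by (induction a rule: seq_snoc_induct) auto

lemma num_cat: "AX G \<Longrightarrow> nd G (Eq (Cat (num a) (num b)) (num (scat a b)))"
proof (induction b rule: seq_snoc_induct)
  case 1
  obtain xs where "a = Sq xs" by (cases a)
  then show ?case using ax3[OF 1] by simp
next
  case (2 ys y)
  obtain xs where a: "a = Sq xs" by (cases a)
  have "nd G (Eq (Cat (num a) (Cons (num (Sq ys)) (num y))) (Cons (Cat (num a) (num (Sq ys))) (num y)))"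
    by (rule ax4[OF 2(3)])
  moreover have "nd G (Eq (Cons (Cat (num a) (num (Sq ys))) (num y)) (Cons (num (scat a (Sq ys))) (num y)))"
    by (rule cons_cong[OF 2(1)[OF 2(3)] Refl])
  moreover have "num (scat a (Sq (ys @ [y]))) = Cons (num (scat a (Sq ys))) (num y)"
    using a num_snoc[of "xs @ ys" y] by simp
  ultimately show ?case by (auto intro: eq_trans)
qed

lemma eval_closed: "AX G \<Longrightarrow> closedt 0 s \<Longrightarrow> nd G (Eq s (num (evalt env s)))"
proof (induction s)
  case (Var x) then show ?case by simp
next
  case E then show ?case using Refl by simp
next
  case (Cons s t)
  obtain xs where a: "evalt env s = Sq xs" by (cases "evalt env s")
  from Cons show ?case using cons_cong[OF Cons(1) Cons(2)] a by simp
next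
  case (Cat s t)
  from Cat have "nd G (Eq (Cat s t) (Cat (num (evalt env s)) (num (evalt env t))))"
    by (simp add: cat_cong)
  then show ?case using num_cat[OF Cat(3)] by (simp add: eq_trans)
qed

lemma num_distinct: "AX G \<Longrightarrow> a \<noteq> b \<Longrightarrow> nd G (Neg (Eq (num a) (num b)))"
proof (induction a arbitrary: b rule: measure_induct_rule[where f = size])
  case (less a)
  obtain xs where a: "a = Sq xs" by (cases a)
  obtain ys where b: "b = Sq ys" by (cases b)
  show ?case
  proof (cases xs rule: rev_exhaust)
    case Nil
    then show ?thesis
    proof (cases ys rule: rev_exhaust)
      case Nil then show ?thesis using less.prems a b \<open>xs = []\<close> by simp
    next
      case (snoc ys' y)
      then show ?thesis using a b \<open>xs = []\<close> neg_sym[OF ax1[OF less(2)]] by simp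
    qed
  next
    case (snoc xs' x)
    then show ?thesis
    proof (cases ys rule: rev_exhaust)
      case Nil then show ?thesis using a b snoc ax1[OF less(2)] by simp
    next
      case snoc2: (snoc ys' y)
      let ?H = "Eq (Cons (num (Sq xs')) (num x)) (Cons (num (Sq ys')) (num y))"
      have inj: "nd (?H # G) (Conj (Eq (num (Sq xs')) (num (Sq ys'))) (Eq (num x) (num y)))"
        by (rule ImpE[OF ax2 Assm]) (use less(2) in auto)
      have "nd G (Neg ?H)"
      proof (cases "Sq xs' = Sq ys'")
        case True
        then have "x \<noteq> y" using less.prems(2) a b snoc snoc2 by auto
        moreover have "size x < size a" using a snoc by simp
        ultimately have "nd G (Neg (Eq (num x) (num y)))" using less.IH less.prems(1) by blast
        then have w: "nd (?H # G) (Neg (Eq (num x) (num y)))" by (rule nd_weaken) auto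
        show ?thesis by (rule NegI[OF ConjE2[OF inj] w])
      next
        case False
        moreover have "size (Sq xs') < size a" using a snoc by simp
        ultimately have "nd G (Neg (Eq (num (Sq xs')) (num (Sq ys'))))" using less.IH less.prems(1) by blast
        then have w: "nd (?H # G) (Neg (Eq (num (Sq xs')) (num (Sq ys'))))" by (rule nd_weaken) auto
        show ?thesis by (rule NegI[OF ConjE1[OF inj] w])
      qed
      then show ?thesis using a b snoc snoc2 by simp
    qed
  qed
qed



lemma prefix_step:
  assumes ax: "AX G" and eq: "nd G (Eq (Cat x y) c)" and cl: "closedt 0 c"
    and self: "nd G (Imp (Eq x c) r)"
    and H: "\<And>G'. AX G' \<Longrightarrow> (\<forall>f\<in>set G. liftf 0 (liftf 0 f) \<in> set G') \<Longrightarrow>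
        nd G' (Eq (Cons (Cat (liftt 0 (liftt 0 x)) (Var 1)) (Var 0)) c) \<Longrightarrow> nd G' (liftf 0 (liftf 0 r))"
  shows "nd G r"
proof -
  let ?EQ = "Eq (Cat x y) c"
  let ?Q = "Eq (liftt 0 (liftt 0 y)) (Cons (Var 1) (Var 0))"
  define G1 where "G1 = ?EQ # G"
  have ax1: "AX G1" using ax by (auto simp: G1_def)
  have d: "nd G1 (Disj (Eq y E) (Ex (Ex ?Q)))" by (rule ax5[OF ax1])
  have c1: "nd (Eq y E # G1) r"
  proof -
    let ?G = "Eq y E # G1"
    have axg: "AX ?G" using ax1 by auto
    have e1: "nd ?G ?EQ" by (rule Assm) (simp add: G1_def)
    have e2: "nd ?G (Eq y E)" by (rule Assm) simp
    have h1: "nd ?G (Eq (Cat x y) (Cat x E))" by (rule cat_cong[OF Refl e2])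
    have h2: "nd ?G (Eq (Cat x E) c)" by (rule eq_trans[OF eq_sym[OF h1] e1])
    have h3: "nd ?G (Eq x c)" by (rule eq_trans[OF eq_sym[OF ax3[OF axg]] h2])
    have h4: "nd ?G (Imp (Eq x c) r)" using self by (rule nd_weaken) (auto simp: G1_def)
    show ?thesis by (rule ImpE[OF h4 h3])
  qed
  have c2: "nd (Ex (Ex ?Q) # G1) r"
  proof -
    define G2 where "G2 = Ex (Ex ?Q) # G1"
    define G3 where "G3 = Ex ?Q # map (liftf 0) G2"
    define G4 where "G4 = ?Q # map (liftf 0) G3"
    have "AX G2" using ax1 by (auto simp: G2_def)
    then have "AX G3" unfolding G3_def by (rule ax_lift2)
    then have ax4': "AX G4" unfolding G4_def by (rule ax_lift2)
    have sub: "\<forall>f\<in>set G. liftf 0 (liftf 0 f) \<in> set G4"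
      by (auto simp: G4_def G3_def G2_def G1_def)
    have "liftf 0 (liftf 0 ?EQ) \<in> set G4"
      by (auto simp: G4_def G3_def G2_def G1_def)
    then have F1: "nd G4 (Eq (Cat (liftt 0 (liftt 0 x)) (liftt 0 (liftt 0 y))) c)"
      using cl by (intro Assm) simp
    have "nd G4 ?Q" by (rule Assm) (simp add: G4_def)
    then have F2: "nd G4 (Eq (Cat (liftt 0 (liftt 0 x)) (liftt 0 (liftt 0 y)))
                  (Cat (liftt 0 (liftt 0 x)) (Cons (Var 1) (Var 0))))"
      by (rule cat_cong[OF Refl])
    have F3: "nd G4 (Eq (Cat (liftt 0 (liftt 0 x)) (Cons (Var 1) (Var 0))) c)"
      by (rule eq_trans[OF eq_sym[OF F2] F1])
    have "nd G4 (Eq (Cons (Cat (liftt 0 (liftt 0 x)) (Var 1)) (Var 0)) c)"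
      by (rule eq_trans[OF eq_sym[OF ax4[OF ax4']] F3])
    then have "nd G4 (liftf 0 (liftf 0 r))" using H ax4' sub by blast
    then have "nd G3 (liftf 0 r)" unfolding G4_def
      by (rule ExE_mem') (auto simp: G3_def)
    then show ?thesis unfolding G3_def G2_def[symmetric]
      by (rule ExE_mem') (auto simp: G2_def)
  qed
  have "nd G1 r" by (rule DisjE[OF d c1 c2])
  then show ?thesis using eq unfolding G1_def by (rule nd_cut)
qed

lemma scat_snoc: "scat a b = Sq cs \<Longrightarrow> scat a (scons b d) = Sq (cs @ [d])"
  by (cases a; cases b) auto

lemma prefix1:
  "AX G \<Longrightarrow> nd G (Eq (Cat x y) (num (Sq cs))) \<Longrightarrow>
   (\<And>a b. scat a b = Sq cs \<Longrightarrow> Imp (Eq x (num a)) r \<in> set G) \<Longrightarrow> nd G r"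
proof (induction cs arbitrary: x y G r rule: rev_induct)
  case Nil
  have self: "nd G (Imp (Eq x (num (Sq []))) r)"
    by (rule Assm, rule Nil.prems(3)[of _ "Sq []"]) simp
  show ?case
  proof (rule prefix_step[OF Nil.prems(1) Nil.prems(2) _ self])
    fix G' assume a: "AX G'" and e: "nd G' (Eq (Cons (Cat (liftt 0 (liftt 0 x)) (Var 1)) (Var 0)) (num (Sq [])))"
    have "nd G' (Eq (Cons (Cat (liftt 0 (liftt 0 x)) (Var 1)) (Var 0)) E)" using e by simp
    then show "nd G' (liftf 0 (liftf 0 r))" by (rule NegE[OF _ ax1[OF a]])
  qed simp
next
  case (snoc d cs)
  have self: "nd G (Imp (Eq x (num (Sq (cs @ [d])))) r)"
    by (rule Assm, rule snoc.prems(3)[of _ "Sq []"]) simp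
  show ?case
  proof (rule prefix_step[OF snoc.prems(1) snoc.prems(2) _ self])
    fix G' assume a: "AX G'" and sub: "\<forall>f\<in>set G. liftf 0 (liftf 0 f) \<in> set G'"
      and e: "nd G' (Eq (Cons (Cat (liftt 0 (liftt 0 x)) (Var 1)) (Var 0)) (num (Sq (cs @ [d]))))"
    have "nd G' (Conj (Eq (Cat (liftt 0 (liftt 0 x)) (Var 1)) (num (Sq cs))) (Eq (Var 0) (num d)))"
      using ImpE[OF ax2[OF a], of "Cat (liftt 0 (liftt 0 x)) (Var 1)" "Var 0" "num (Sq cs)" "num d"] e by simp
    then have e': "nd G' (Eq (Cat (liftt 0 (liftt 0 x)) (Var 1)) (num (Sq cs)))" by (rule ConjE1)
    show "nd G' (liftf 0 (liftf 0 r))"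
    proof (rule snoc.IH[OF a e'])
      fix a b assume "scat a b = Sq cs"
      then have "Imp (Eq x (num a)) r \<in> set G" using snoc.prems(3) scat_snoc by blast
      then show "Imp (Eq (liftt 0 (liftt 0 x)) (num a)) (liftf 0 (liftf 0 r)) \<in> set G'"
        using sub by force
    qed
  qed simp
qed

lemma prefix2:
  assumes ax: "AX G" and eq: "nd G (Eq (Cat x y) (num c))"
    and pre: "\<And>a b. scat a b = c \<Longrightarrow> nd G (Imp (Eq x (num a)) r)"
  shows "nd G r"
proof -
  obtain cs where c: "c = Sq cs" by (cases c)
  define fs where "fs = map (\<lambda>i. Imp (Eq x (num (Sq (take i cs)))) r) [0..<Suc (length cs)]"
  have "nd (fs @ G) r"
  proof (rule prefix1)
    show "AX (fs @ G)" using ax by auto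
    show "nd (fs @ G) (Eq (Cat x y) (num (Sq cs)))" using eq c by (auto intro: nd_weaken)
    fix a b assume h: "scat a b = Sq cs"
    obtain as bs where ab: "a = Sq as" "b = Sq bs" by (cases a; cases b)
    then have "as = take (length as) cs" "length as < Suc (length cs)" using h by auto
    then show "Imp (Eq x (num a)) r \<in> set (fs @ G)" unfolding fs_def using ab
      by (metis (no_types, lifting) UnI1 atLeastLessThan_iff image_eqI le0 set_append set_map set_upt)
  qed
  moreover have "\<forall>f\<in>set fs. nd G f"
  proof
    fix f assume "f \<in> set fs"
    then obtain i where f: "f = Imp (Eq x (num (Sq (take i cs)))) r" unfolding fs_def by (auto simp del: upt_Suc)
    have "scat (Sq (take i cs)) (Sq (drop i cs)) = c" using c by simp
    then show "nd G f" using pre f by blast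
  qed
  ultimately show ?thesis by (rule nd_cut_list)
qed



definition ins :: "nat \<Rightarrow> seq \<Rightarrow> (nat \<Rightarrow> seq) \<Rightarrow> nat \<Rightarrow> seq" where
  "ins k v env i = (if i < k then env i else if i = k then v else env (i - 1))"

lemma evalt_lift0[simp]: "evalt (case_nat x env) (liftt 0 u) = evalt env u"
  by (induction u) auto

lemma evalt_subst: "evalt env (substt s u k) = evalt (ins k (evalt env u) env) s"
  by (induction s) (auto simp: ins_def)

lemma ins_suc: "ins (Suc k) v (case_nat x env) = case_nat x (ins k v env)"
  by (rule ext) (auto simp: ins_def split: nat.split)

lemma ins0: "ins 0 v env = case_nat v env"
  by (rule ext) (auto simp: ins_def split: nat.split)

lemma sat_subst: "sat env (substf p u k) = sat (ins k (evalt env u) env) p"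
  by (induction p arbitrary: env u k) (auto simp: evalt_subst ins_suc)

lemma evalt_closed: "closedt k s \<Longrightarrow> (\<forall>i<k. env i = env' i) \<Longrightarrow> evalt env s = evalt env' s"
  by (induction s) auto

lemma evalt_closed0: "closedt 0 s \<Longrightarrow> evalt env s = evalt env' s"
  using evalt_closed by blast

lemma sat_closed: "closedf k p \<Longrightarrow> (\<forall>i<k. env i = env' i) \<Longrightarrow> sat env p = sat env' p"
proof (induction p arbitrary: k env env')
  case (Eq s t) then show ?case using evalt_closed by (metis closedf.simps(1) sat.simps(1))
next
  case (Ex p)
  have "\<And>x. \<forall>i<Suc k. case_nat x env i = case_nat x env' i" using Ex.prems(2) by (auto simp: less_Suc_eq_0_disj)
  then show ?case using Ex by (metis closedf.simps(6) sat.simps(6))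
next
  case (All p)
  have "\<And>x. \<forall>i<Suc k. case_nat x env i = case_nat x env' i" using All.prems(2) by (auto simp: less_Suc_eq_0_disj)
  then show ?case using All by (metis closedf.simps(7) sat.simps(7))
qed (metis closedf.simps sat.simps)+

lemma substf_sub: "substf (sub s t) u k = sub (substt s u k) (substt t u k)"
  by (simp add: sub_def)

lemma substf_ball: "substf (ball t p) u k = ball (substt t u k) (substf p (liftt 0 u) (Suc k))"
  by (simp add: ball_def sub_def)

lemma sigma_subst: "sigma p \<Longrightarrow> sigma (substf p u k)"
proof (induction arbitrary: u k rule: sigma.induct)
  case (sig_sub s t) then show ?case by (simp only: substf_sub sigma.intros)
next
  case (sig_nsub s t) then show ?case by (simp only: substf.simps substf_sub sigma.intros)
next
  case (sig_ball p t) then show ?case by (simp only: substf_ball sigma.intros)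
qed (auto intro: sigma.intros)

fun fd :: "fm \<Rightarrow> nat" where
  "fd (Eq s t) = 0"
| "fd (Neg p) = Suc (fd p)"
| "fd (Conj p q) = Suc (fd p + fd q)"
| "fd (Disj p q) = Suc (fd p + fd q)"
| "fd (Imp p q) = Suc (fd p + fd q)"
| "fd (Ex p) = Suc (fd p)"
| "fd (All p) = Suc (fd p)"

lemma fd_subst[simp]: "fd (substf p u k) = fd p"
  by (induction p arbitrary: u k) auto



abbreviation "A \<equiv> seq_axioms"

lemma AX_A: "AX A" by simp

lemma eq_num_closed:
  "AX G \<Longrightarrow> closedt 0 s \<Longrightarrow> closedt 0 t \<Longrightarrow> evalt env s = evalt env t \<Longrightarrow> nd G (Eq s t)"
proof -
  assume h: "AX G" "closedt 0 s" "closedt 0 t" "evalt env s = evalt env t"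
  have 1: "nd G (Eq s (num (evalt env s)))" by (rule eval_closed[OF h(1,2)])
  have 2: "nd G (Eq t (num (evalt env s)))" using eval_closed[OF h(1,3), of env] h(4) by simp
  show ?thesis by (rule eq_trans[OF 1 eq_sym[OF 2]])
qed

lemma main: "sigma p \<Longrightarrow> closedf 0 p \<Longrightarrow> sat env p \<Longrightarrow> nd A p"
proof (induction "fd p" arbitrary: p env rule: less_induct)
  case less
  from less.prems(1) show ?case
  proof cases
    case (sig_eq s t)
    then show ?thesis using less.prems eq_num_closed[OF AX_A, of s t env] by simp
  next
    case (sig_neq s t)
    then have cs: "closedt 0 s" "closedt 0 t" and ne: "evalt env s \<noteq> evalt env t" using less.prems by auto
    let ?G = "Eq s t # A"
    have "nd ?G (Eq (num (evalt env s)) (num (evalt env t)))"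
    proof -
      have 1: "nd ?G (Eq s t)" by (rule Assm) simp
      have "AX ?G" by auto
      then have 2: "nd ?G (Eq s (num (evalt env s)))" and 3: "nd ?G (Eq t (num (evalt env t)))"
        using eval_closed cs by blast+
      show ?thesis by (rule eq_trans[OF eq_sym[OF 2] eq_trans[OF 1 3]])
    qed
    moreover have "nd ?G (Neg (Eq (num (evalt env s)) (num (evalt env t))))"
      using num_distinct[OF AX_A ne] by (rule nd_weaken) auto
    ultimately have "nd A (Neg (Eq s t))" by (rule NegI)
    then show ?thesis using sig_neq by simp
  next
    case (sig_sub s t)
    then have cs: "closedt 0 s" "closedt 0 t" using less.prems by (auto simp: sub_def)
    obtain y where y: "scat (evalt env s) y = evalt env t"
    proof -
      from less.prems(3) sig_sub cs obtain x where "scat (evalt (case_nat x env) s) x = evalt (case_nat x env) t"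
        by (auto simp: sub_def)
      then show ?thesis using that evalt_closed0[OF cs(1)] evalt_closed0[OF cs(2)] by metis
    qed
    have 1: "nd A (Eq (Cat s (num y)) (Cat (num (evalt env s)) (num y)))"
      using eval_closed[OF AX_A cs(1)] by (rule cat_cong[OF _ Refl])
    have 2: "nd A (Eq (Cat (num (evalt env s)) (num y)) (num (evalt env t)))"
      using num_cat[OF AX_A, of "evalt env s" y] y by simp
    have 3: "nd A (Eq (num (evalt env t)) t)" using eval_closed[OF AX_A cs(2)] by (rule eq_sym)
    have "nd A (Eq (Cat s (num y)) t)" by (rule eq_trans[OF 1 eq_trans[OF 2 3]])
    then have "nd A (substf (Eq (Cat s (Var 0)) t) (num y) 0)" using cs by simp
    then have "nd A (Ex (Eq (Cat s (Var 0)) t))" by (rule ExI)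
    then show ?thesis using sig_sub cs by (simp add: sub_def)
  next
    case (sig_nsub s t)
    then have cs: "closedt 0 s" "closedt 0 t" using less.prems by (auto simp: sub_def)
    have np: "\<not> (\<exists>y. scat (evalt env s) y = evalt env t)"
      using less.prems sig_nsub cs evalt_closed0[OF cs(1)] evalt_closed0[OF cs(2)] by (auto simp: sub_def) metis
    let ?P = "Ex (Eq (Cat s (Var 0)) t)"
    let ?F = "Neg (Eq E E)"
    define C where "C = Eq (Cat s (Var 0)) t # map (liftf 0) (?P # A)"
    have axC: "AX C" unfolding C_def by (rule ax_lift2) auto
    have "nd C ?F"
    proof (rule prefix2[OF axC])
      have "nd C (Eq (Cat s (Var 0)) t)" by (rule Assm) (simp add: C_def)
      then show "nd C (Eq (Cat s (Var 0)) (num (evalt env t)))"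
        using eval_closed[OF axC cs(2)] by (rule eq_trans)
      fix a b assume ab: "scat a b = evalt env t"
      then have ne: "evalt env s \<noteq> a" using np by blast
      let ?G = "Eq s (num a) # C"
      have axG: "AX ?G" using axC by auto
      have "nd ?G (Eq (num (evalt env s)) (num a))"
      proof -
        have 1: "nd ?G (Eq s (num a))" by (rule Assm) simp
        show ?thesis by (rule eq_trans[OF eq_sym[OF eval_closed[OF axG cs(1), of env]] 1])
      qed
      then have "nd ?G ?F" using num_distinct[OF axG ne] by (rule NegE)
      then show "nd C (Imp (Eq s (num a)) ?F)" by (rule ImpI)
    qed
    then have "nd (Eq (Cat s (Var 0)) t # map (liftf 0) (?P # A)) (liftf 0 ?F)" by (simp add: C_def)
    then have "nd (?P # A) ?F" by (rule ExE_mem') simp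
    moreover have "nd (?P # A) (Eq E E)" by (rule Refl)
    ultimately have "nd A (Neg ?P)" by (rule NegI[rotated])
    then show ?thesis using sig_nsub cs by (simp add: sub_def)
  next
    case (sig_conj p1 p2)
    then show ?thesis using less by (auto intro!: ConjI)
  next
    case (sig_disj p1 p2)
    then show ?thesis using less by (auto intro: DisjI1 DisjI2)
  next
    case (sig_ex q)
    then have cq: "closedf (Suc 0) q" using less.prems by auto
    obtain x where x: "sat (case_nat x env) q" using less.prems sig_ex by auto
    let ?q = "substf q (num x) 0"
    have "nd A ?q"
    proof (rule less.hyps)
      show "fd ?q < fd p" using sig_ex by simp
      show "sigma ?q" using sig_ex sigma_subst by blast
      show "closedf 0 ?q" using cq by (simp add: closedf_substf)
      show "sat env ?q" using x by (simp add: sat_subst ins0)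
    qed
    then show ?thesis using sig_ex by (auto intro: ExI)
  next
    case (sig_ball q t)
    then have ct: "closedt 0 t" and cq: "closedf (Suc 0) q" using less.prems
      by (auto simp: ball_def sub_def)
    have sem: "\<And>x. (\<exists>y. scat x y = evalt env t) \<Longrightarrow> sat (case_nat x env) q"
      using less.prems sig_ball ct evalt_closed0[OF ct] by (auto simp: ball_def sub_def) metis
    let ?P = "Ex (Eq (Cat (Var (Suc 0)) (Var 0)) t)"
    define C where "C = Eq (Cat (Var (Suc 0)) (Var 0)) t # map (liftf 0) (?P # A)"
    have axC: "AX C" unfolding C_def by (rule ax_lift2) auto
    have "nd C (liftf 0 q)"
    proof (rule prefix2[OF axC])
      have "nd C (Eq (Cat (Var (Suc 0)) (Var 0)) t)" by (rule Assm) (simp add: C_def)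
      then show "nd C (Eq (Cat (Var (Suc 0)) (Var 0)) (num (evalt env t)))"
        using eval_closed[OF axC ct] by (rule eq_trans)
      fix a b assume ab: "scat a b = evalt env t"
      let ?q = "substf q (num a) 0"
      have "nd A ?q"
      proof (rule less.hyps)
        show "fd ?q < fd p" using sig_ball by (simp add: ball_def)
        show "sigma ?q" using sig_ball sigma_subst by blast
        show "closedf 0 ?q" using cq by (simp add: closedf_substf)
        show "sat env ?q" using sem ab by (auto simp: sat_subst ins0)
      qed
      let ?G = "Eq (Var (Suc 0)) (num a) # C"
      have "nd ?G (Eq (num a) (Var (Suc 0)))" by (rule eq_sym, rule Assm) simp
      moreover have "nd ?G ?q" using \<open>nd A ?q\<close> by (rule nd_weaken) (auto simp: C_def)
      ultimately have "nd ?G (liftf 0 q)"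
        by (rule Subst'[where p = q]) (auto simp: substf_var_lift[OF cq, simplified])
      then show "nd C (Imp (Eq (Var (Suc 0)) (num a)) (liftf 0 q))" by (rule ImpI)
    qed
    then have "nd (?P # A) q" unfolding C_def by (rule ExE_mem') simp
    then have "nd A (Imp ?P q)" by (rule ImpI)
    then have "nd (map (liftf 0) A) (Imp ?P q)" by simp
    then have "nd A (All (Imp ?P q))" by (rule AllI)
    then show ?thesis using sig_ball ct by (simp add: ball_def sub_def)
  qed
qed

theorem corollary1:
  assumes "sigma p" and "closedf 0 p" and "std_models p"
  shows "Seq_proves p"
  using main[OF assms(1,2)] assms(3) unfolding std_models_def Seq_proves_def by blast

end
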